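(* Let $n$ be an odd positive integer and let $p^a$ be a prime power dividing $n$ ($p$ prime, $a\ge1$). Suppose there is a prime $q$ with $n/3<q<n/2$ and $n-2q<p^a$. Then for every integer $k$ with $1\le k\le n-1$, $\binom{n}{k}$ is divisible by $p$ or by $q$. *)

theory Defs
  imports Complex_Main "HOL-Computational_Algebra.Primes"
begin

end

theory Submission
  imports Defs
begin

lemma qfact1:
  fixes q j :: nat
  assumes "prime q" "j < q"
  shows "\<exists>R. fact (q + j) = q * R \<and> \<not> q dvd R"
  using assms(2)
proof (induction j)
  case 0
  have q0: "q > 0" using assms(1) prime_gt_0_nat by blast
  have "fact q = q * fact (q - 1)"
    using fact_reduce[OF q0, where 'a=nat] by simp
  moreover have "\<not> q dvd fact (q - 1)"
    using prime_dvd_fact_iff[OF assms(1)] q0 by simp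
  ultimately show ?case by auto
next
  case (Suc j)
  then obtain R where R: "fact (q + j) = q * R" "\<not> q dvd R" by auto
  have "fact (q + Suc j) = Suc (q + j) * fact (q + j)" by simp
  hence e: "fact (q + Suc j) = q * (Suc (q + j) * R)" using R by (simp only: ac_simps)
  have nd: "\<not> q dvd Suc (q + j)"
  proof
    assume "q dvd Suc (q + j)"
    hence "q dvd q + Suc j" by simp
    hence "q dvd Suc j" using dvd_add_right_iff[of q q "Suc j"] by simp
    moreover have "0 < Suc j" "Suc j < q" using Suc by auto
    ultimately show False using nat_dvd_not_less by blast
  qed
  have "\<not> q dvd (Suc (q + j) * R)"
    using nd R(2) prime_dvd_mult_iff[OF assms(1)] by blast
  then show ?case using e by blast
qed

lemma qfact2:
  fixes q n :: nat
  assumes "prime q" "2 * q \<le> n"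
  shows "q * q dvd fact n"
proof -
  have q0: "q > 0" using assms(1) prime_gt_0_nat by blast
  have "fact (2 * q) = (2 * q) * fact (2 * q - 1)"
    using fact_reduce[of "2 * q", where 'a=nat] q0 by simp
  moreover have "q dvd fact (2 * q - 1)"
    using prime_dvd_fact_iff[OF assms(1)] q0 by simp
  ultimately have "q * q dvd fact (2 * q)"
    by (metis dvd_triv_right mult_dvd_mono)
  moreover have "(fact (2 * q) :: nat) dvd fact n" using assms(2) fact_dvd by blast
  ultimately show ?thesis by (meson dvd_trans)
qed

lemma qdvd_choose:
  fixes q n k :: nat
  assumes "prime q" "2 * q \<le> n" "k < q" "q \<le> n - k" "n - k < 2 * q"
  shows "q dvd (n choose k)"
proof (rule ccontr)
  assume nd: "\<not> q dvd (n choose k)"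
  have kn: "k \<le> n" using assms by linarith
  define j where "j = n - k - q"
  have j: "n - k = q + j" "j < q" using assms(4,5) unfolding j_def by linarith+
  obtain R where R: "fact (n - k) = q * R" "\<not> q dvd R" using qfact1[OF assms(1) j(2)] j(1) by auto
  have "fact k * fact (n - k) * (n choose k) = (fact n :: nat)" using binomial_fact_lemma[OF kn] .
  hence "fact k * (q * R) * (n choose k) = (fact n :: nat)" using R(1) by simp
  hence "q * (fact k * R * (n choose k)) = (fact n :: nat)" by (simp only: ac_simps)
  hence "q * q dvd q * (fact k * R * (n choose k))" using qfact2[OF assms(1,2)] by simp
  hence "q dvd fact k * R * (n choose k)" using assms(1) prime_gt_0_nat by auto
  moreover have "\<not> q dvd fact k" using prime_dvd_fact_iff[OF assms(1)] assms(3) by simp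
  ultimately show False using nd R(2) prime_dvd_mult_iff[OF assms(1)] by blast
qed

lemma pdvd_choose:
  fixes p a n k :: nat
  assumes "prime p" "p ^ a dvd n" "0 < k" "\<not> p dvd (n choose k)"
  shows "p ^ a dvd k"
proof -
  have "k * (n choose k) = n * ((n - 1) choose (k - 1))" using times_binomial_minus1_eq[OF assms(3)] .
  hence "p ^ a dvd k * (n choose k)" using assms(2) by (metis dvd_mult2)
  moreover have "coprime (p ^ a) (n choose k)"
    using assms(1,4) by (simp add: prime_imp_coprime)
  ultimately show ?thesis using coprime_dvd_mult_left_iff by blast
qed

theorem mainTheorem9:
  fixes n p a q :: nat
  assumes "odd n" and "n > 0"
    and "prime p" and "a \<ge> 1" and "p ^ a dvd n"
    and "prime q"
    and "real n / 3 < real q" and "real q < real n / 2"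
    and "int n - 2 * int q < int (p ^ a)"
  shows "\<forall>k. 1 \<le> k \<and> k \<le> n - 1 \<longrightarrow> p dvd (n choose k) \<or> q dvd (n choose k)"
proof (intro allI impI)
  fix k assume k: "1 \<le> k \<and> k \<le> n - 1"
  define d where "d = p ^ a"
  have q2n: "2 * q < n" using assms(8) by linarith
  have nd: "int n - 2 * int q < int d" using assms(9) d_def by simp
  have nd': "n < 2 * q + d" using nd by linarith
  show "p dvd (n choose k) \<or> q dvd (n choose k)"
  proof (cases "p dvd (n choose k)")
    case True then show ?thesis by simp
  next
    case False
    have dk: "d dvd k" using pdvd_choose[OF assms(3) assms(5) _ False] k d_def by simp
    have dn: "d dvd n" using assms(5) d_def by simp
    have dnk: "d dvd n - k" using dk dn by (simp add: dvd_diff_nat)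
    have kd: "d \<le> k" using dk k by (simp add: dvd_imp_le)
    have nkd: "d \<le> n - k" proof -
      have "0 < n - k" using k assms(2) by linarith
      then show ?thesis using dnk by (simp add: dvd_imp_le)
    qed
    obtain j where j: "k = d * j" using dk by blast
    obtain m where m: "n = d * m" using dn by blast
    have modd: "odd m" using m assms(1) by simp
    have notmid: "\<not> (q \<le> k \<and> k \<le> n - q)"
    proof
      assume h: "q \<le> k \<and> k \<le> n - q"
      have "2 * int j \<noteq> int m" using modd by (metis even_mult_iff even_numeral of_nat_eq_iff of_nat_mult of_nat_numeral)
      hence "\<bar>2 * int j - int m\<bar> \<ge> 1" by linarith
      hence "int d * 1 \<le> int d * \<bar>2 * int j - int m\<bar>" by (intro mult_left_mono) auto
      hence "int d * \<bar>2 * int j - int m\<bar> \<ge> int d" by simp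
      moreover have "2 * int k - int n = int d * (2 * int j - int m)" using j m by (simp add: algebra_simps)
      ultimately have "\<bar>2 * int k - int n\<bar> \<ge> int d" by (simp add: abs_mult)
      moreover have "int q \<le> int k" "int k \<le> int n - int q" using h q2n by linarith+
      hence "\<bar>2 * int k - int n\<bar> \<le> int n - 2 * int q" by (simp add: abs_le_iff)
      ultimately show False using nd by linarith
    qed
    show ?thesis
    proof (cases "k < q")
      case True
      have "q \<le> n - k" "n - k < 2 * q" using True q2n nd' kd by linarith+
      hence "q dvd (n choose k)"
        using qdvd_choose[OF assms(6)] True q2n by simp
      then show ?thesis by simp
    next
      case False
      hence kq: "n - q < k" using notmid by linarith
      have "n - k < q" "q \<le> n - (n - k)" "n - (n - k) < 2 * q" using kq k q2n nd' nkd by linarith+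
      hence "q dvd (n choose (n - k))"
        using qdvd_choose[OF assms(6), of n "n - k"] q2n by simp
      moreover have "k \<le> n" using k by linarith
      ultimately show ?thesis using binomial_symmetric[of k n] by simp
    qed
  qed
qed

end
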